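(* Let $N\geq1$, let $\mathbb{A}$ be a real antisymmetric $N\times N$ matrix, let $\gamma_1,\dots,\gamma_N\geq 0$ and $v_1,\dots,v_N\in\{-1,+1\}$, and let $\mathbb{L}=\mathbb{A}+\mathbb{D}$ with $\mathbb{D}=\mathrm{diag}(2\gamma_1v_1,\dots,2\gamma_Nv_N)$. Let $\mathfrak{V}=\{j: v_j=+1\}$ and $L_0=2\sum_{j\in\mathfrak{V}}\gamma_j$. Let $\lambda_1,\dots,\lambda_N$ be the eigenvalues of $\mathbb{L}$ (with multiplicity), ordered so that $\mathrm{Re}\,\lambda_1\geq\mathrm{Re}\,\lambda_2\geq\cdots\geq\mathrm{Re}\,\lambda_N$, and for $0\leq n\leq N$ set $\Delta_n=L_0-\sum_{k=1}^n\mathrm{Re}\,\lambda_k$. Then: (i) if $\mathfrak{V}\neq\emptyset$, $$\max\Big\{0,\;2\Big(\sum_{j\in\mathfrak{V}}\gamma_j-n\max_{j\in\mathfrak{V}}\gamma_j\Big)\Big\}\leq\Delta_n\leq 2\Big(\sum_{j\in\mathfrak{V}}\gamma_j+n\max_{1\le j\le N}\gamma_j\Big);$$ (ii) if $\mathfrak{V}=\emptyset$, $$2n\min_{1\le j\le N}\gamma_j\leq\Delta_n\leq 2n\max_{1\le j\le N}\gamma_j.$$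
   Context: $\mathbb{L}$ is the single-particle matrix of a fermion-number-conserving Lindbladian $\mathcal{L}=\sum_{ij}f_i^\dagger\mathbb{L}_{ij}f_j-L_0$, and $\Delta_n$ is the spectral gap (slowest decay rate) in the sector with $n$ adjoint fermions; $\mathfrak{V}$ is the set of sites with interlayer gauge flips. *)

theory Defs
  imports Jordan_Normal_Form.Char_Poly
begin

text \<open>Indices are 0-based: sites j range over {0..<N}.\<close>

definition diagD :: "nat \<Rightarrow> (nat \<Rightarrow> real) \<Rightarrow> (nat \<Rightarrow> real) \<Rightarrow> real mat" where
  "diagD N \<gamma> v = mat N N (\<lambda>(i,j). if i = j then 2 * \<gamma> i * v i else 0)"

definition Lmat :: "nat \<Rightarrow> real mat \<Rightarrow> (nat \<Rightarrow> real) \<Rightarrow> (nat \<Rightarrow> real) \<Rightarrow> real mat" where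
  "Lmat N A \<gamma> v = A + diagD N \<gamma> v"

definition flipset :: "nat \<Rightarrow> (nat \<Rightarrow> real) \<Rightarrow> nat set" where
  "flipset N v = {j. j < N \<and> v j = 1}"

definition L0 :: "nat \<Rightarrow> (nat \<Rightarrow> real) \<Rightarrow> (nat \<Rightarrow> real) \<Rightarrow> real" where
  "L0 N \<gamma> v = 2 * (\<Sum>j\<in>flipset N v. \<gamma> j)"

text \<open>Eigenvalues with multiplicity: a list whose linear factors multiply to the
  characteristic polynomial of L (viewed as a complex matrix).\<close>
definition eigenvalue_list :: "real mat \<Rightarrow> complex list \<Rightarrow> bool" where
  "eigenvalue_list M ls \<longleftrightarrow>
     char_poly (map_mat complex_of_real M) = (\<Prod>a\<leftarrow>ls. [:- a, 1:])"

definition gap :: "nat \<Rightarrow> (nat \<Rightarrow> real) \<Rightarrow> (nat \<Rightarrow> real) \<Rightarrow> complex list \<Rightarrow> nat \<Rightarrow> real" where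
  "gap N \<gamma> v ls n = L0 N \<gamma> v - (\<Sum>k<n. Re (ls ! k))"

end

theory Submission
  imports Defs "Jordan_Normal_Form.Schur_Decomposition"
begin


definition adj :: "complex mat \<Rightarrow> complex mat" where
  "adj M = mat (dim_col M) (dim_row M) (\<lambda>(i,j). cnj (M $$ (j,i)))"

definition qf :: "complex mat \<Rightarrow> complex vec \<Rightarrow> complex" where
  "qf M x = (\<Sum>i\<in>{0..<dim_vec x}. \<Sum>j\<in>{0..<dim_vec x}. cnj (x$i) * M$$(i,j) * x$j)"

definition tr :: "complex mat \<Rightarrow> complex" where
  "tr M = (\<Sum>i\<in>{0..<dim_row M}. M$$(i,i))"

lemma mult_idx:
  assumes "A \<in> carrier_mat n m" "B \<in> carrier_mat m p" "i < n" "j < p"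
  shows "(A*B)$$(i,j) = (\<Sum>k\<in>{0..<m}. A$$(i,k)*B$$(k,j))"
  using assms by (simp add: scalar_prod_def)

lemma mv_idx:
  assumes "A \<in> carrier_mat n m" "y \<in> carrier_vec m" "i < n"
  shows "(A *\<^sub>v y)$i = (\<Sum>k\<in>{0..<m}. A$$(i,k)*y$k)"
  using assms by (auto simp add: scalar_prod_def mult_ac)

lemma adj_carrier[simp]: "W \<in> carrier_mat m n \<Longrightarrow> adj W \<in> carrier_mat n m"
  by (simp add: adj_def)

lemma adj_dims[simp]: "dim_row (adj M) = dim_col M" "dim_col (adj M) = dim_row M"
  by (simp_all add: adj_def)

lemma adj_idx[simp]: "W \<in> carrier_mat m n \<Longrightarrow> i < n \<Longrightarrow> j < m \<Longrightarrow> adj W $$ (i,j) = cnj (W$$(j,i))"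
  by (simp add: adj_def)

lemma adjMW_idx:
  assumes W: "W \<in> carrier_mat m m" and M: "M \<in> carrier_mat m m" and "i<m" "j<m"
  shows "(adj W * M * W)$$(i,j) = (\<Sum>k\<in>{0..<m}. \<Sum>l\<in>{0..<m}. cnj (W$$(k,i)) * M$$(k,l) * W$$(l,j))"
proof -
  have "(adj W * M * W)$$(i,j) = (\<Sum>l\<in>{0..<m}. (adj W * M)$$(i,l) * W$$(l,j))"
    by (rule mult_idx[OF mult_carrier_mat[OF adj_carrier[OF W] M] W]) (use assms in auto)
  also have "\<dots> = (\<Sum>l\<in>{0..<m}. (\<Sum>k\<in>{0..<m}. cnj (W$$(k,i)) * M$$(k,l)) * W$$(l,j))"
  proof (rule sum.cong[OF refl])
    fix l assume "l \<in> {0..<m}"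
    then show "(adj W * M)$$(i,l) * W$$(l,j) = (\<Sum>k\<in>{0..<m}. cnj (W$$(k,i)) * M$$(k,l)) * W$$(l,j)"
      using assms by (subst mult_idx[OF adj_carrier[OF W] M]) auto
  qed
  also have "\<dots> = (\<Sum>k\<in>{0..<m}. \<Sum>l\<in>{0..<m}. cnj (W$$(k,i)) * M$$(k,l) * W$$(l,j))"
    by (simp add: sum_distrib_right, rule sum.swap)
  finally show ?thesis .
qed

lemma sum4_swap:
  "(\<Sum>i\<in>A. \<Sum>j\<in>A. \<Sum>k\<in>A. \<Sum>l\<in>A. f i j k l) = (\<Sum>k\<in>A. \<Sum>l\<in>A. \<Sum>i\<in>A. \<Sum>j\<in>A. (f i j k l :: complex))"
proof -
  have "(\<Sum>i\<in>A. \<Sum>j\<in>A. \<Sum>k\<in>A. \<Sum>l\<in>A. f i j k l) = (\<Sum>i\<in>A. \<Sum>k\<in>A. \<Sum>j\<in>A. \<Sum>l\<in>A. f i j k l)"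
    by (rule sum.cong[OF refl], rule sum.swap)
  also have "\<dots> = (\<Sum>i\<in>A. \<Sum>k\<in>A. \<Sum>l\<in>A. \<Sum>j\<in>A. f i j k l)"
    by (rule sum.cong[OF refl], rule sum.cong[OF refl], rule sum.swap)
  also have "\<dots> = (\<Sum>k\<in>A. \<Sum>i\<in>A. \<Sum>l\<in>A. \<Sum>j\<in>A. f i j k l)"
    by (rule sum.swap)
  also have "\<dots> = (\<Sum>k\<in>A. \<Sum>l\<in>A. \<Sum>i\<in>A. \<Sum>j\<in>A. f i j k l)"
    by (rule sum.cong[OF refl], rule sum.swap)
  finally show ?thesis .
qed

lemma qf_unitary:
  assumes W: "W \<in> carrier_mat m m" and M: "M \<in> carrier_mat m m" and y: "y \<in> carrier_vec m"
  shows "qf (adj W * M * W) y = qf M (W *\<^sub>v y)"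
proof -
  have "qf (adj W * M * W) y = (\<Sum>i\<in>{0..<m}. \<Sum>j\<in>{0..<m}. cnj (y$i) * (\<Sum>k\<in>{0..<m}. \<Sum>l\<in>{0..<m}. cnj (W$$(k,i)) * M$$(k,l) * W$$(l,j)) * y$j)"
  proof -
    have d: "dim_vec y = m" using y by simp
    show ?thesis unfolding qf_def d
      by (intro sum.cong refl) (subst adjMW_idx[OF W M], auto)
  qed
  also have "\<dots> = (\<Sum>i\<in>{0..<m}. \<Sum>j\<in>{0..<m}. \<Sum>k\<in>{0..<m}. \<Sum>l\<in>{0..<m}. cnj (y$i) * cnj (W$$(k,i)) * M$$(k,l) * W$$(l,j) * y$j)"
    by (simp add: sum_distrib_left sum_distrib_right mult_ac)
  also have "\<dots> = (\<Sum>k\<in>{0..<m}. \<Sum>l\<in>{0..<m}. \<Sum>i\<in>{0..<m}. \<Sum>j\<in>{0..<m}. cnj (y$i) * cnj (W$$(k,i)) * M$$(k,l) * W$$(l,j) * y$j)"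
    by (rule sum4_swap)
  also have "\<dots> = (\<Sum>k\<in>{0..<m}. \<Sum>l\<in>{0..<m}. cnj (\<Sum>i\<in>{0..<m}. W$$(k,i)*y$i) * M$$(k,l) * (\<Sum>j\<in>{0..<m}. W$$(l,j)*y$j))"
    by (simp add: sum_distrib_left sum_distrib_right mult_ac cnj_sum)
  also have "\<dots> = qf M (W *\<^sub>v y)"
    using assms unfolding qf_def by (simp add: mv_idx del: index_mult_mat_vec)
  finally show ?thesis .
qed

lemma tr_unitary:
  assumes W: "W \<in> carrier_mat m m" and G: "G \<in> carrier_mat m m" and WW: "W * adj W = 1\<^sub>m m"
  shows "tr (adj W * G * W) = tr G"
proof -
  have WWi: "(\<Sum>i\<in>{0..<m}. W$$(l,i) * cnj (W$$(k,i))) = (if l = k then 1 else 0)" if "l<m" "k<m" for l k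
  proof -
    have "(W * adj W)$$(l,k) = (\<Sum>i\<in>{0..<m}. W$$(l,i) * cnj (W$$(k,i)))"
      using that W by (subst mult_idx[OF W adj_carrier[OF W]]) auto
    then show ?thesis using WW that by simp
  qed
  have "tr (adj W * G * W) = (\<Sum>i\<in>{0..<m}. \<Sum>k\<in>{0..<m}. \<Sum>l\<in>{0..<m}. cnj (W$$(k,i)) * G$$(k,l) * W$$(l,i))"
  proof -
    have "dim_row (adj W * G * W) = m" using W by (simp add: adj_def)
    then show ?thesis unfolding tr_def by (intro sum.cong refl adjMW_idx[OF W G]) auto
  qed
  also have "\<dots> = (\<Sum>k\<in>{0..<m}. \<Sum>l\<in>{0..<m}. \<Sum>i\<in>{0..<m}. cnj (W$$(k,i)) * G$$(k,l) * W$$(l,i))"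
  proof -
    have "(\<Sum>i\<in>{0..<m}. \<Sum>k\<in>{0..<m}. \<Sum>l\<in>{0..<m}. cnj (W$$(k,i)) * G$$(k,l) * W$$(l,i))
      = (\<Sum>k\<in>{0..<m}. \<Sum>i\<in>{0..<m}. \<Sum>l\<in>{0..<m}. cnj (W$$(k,i)) * G$$(k,l) * W$$(l,i))" by (rule sum.swap)
    also have "\<dots> = (\<Sum>k\<in>{0..<m}. \<Sum>l\<in>{0..<m}. \<Sum>i\<in>{0..<m}. cnj (W$$(k,i)) * G$$(k,l) * W$$(l,i))"
      by (rule sum.cong[OF refl], rule sum.swap)
    finally show ?thesis .
  qed
  also have "\<dots> = (\<Sum>k\<in>{0..<m}. \<Sum>l\<in>{0..<m}. G$$(k,l) * (\<Sum>i\<in>{0..<m}. W$$(l,i) * cnj (W$$(k,i))))"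
    by (simp add: sum_distrib_left mult_ac)
  also have "\<dots> = (\<Sum>k\<in>{0..<m}. \<Sum>l\<in>{0..<m}. G$$(k,l) * (if l = k then 1 else 0))"
    by (intro sum.cong refl, simp add: WWi)
  also have "\<dots> = tr G" using G by (simp add: tr_def if_distrib sum.delta cong: if_cong)
  finally show ?thesis .
qed

lemma sum_delta_mult:
  fixes i m :: nat assumes "i < m" shows "(\<Sum>j\<in>{0..<m}. f j * (if j = i then 1 else 0)) = (f i :: complex)"
proof -
  have "(\<Sum>j\<in>{0..<m}. f j * (if j = i then 1 else 0)) = (\<Sum>j\<in>{0..<m}. if j = i then f j else 0)"
    by (rule sum.cong) auto
  also have "\<dots> = f i" using assms by (subst sum.delta) auto
  finally show ?thesis .
qed

lemma qf_unit:
  assumes "i < m"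
  shows "qf M (unit_vec m i) = M$$(i,i)"
proof -
  have "qf M (unit_vec m i) = (\<Sum>k\<in>{0..<m}. (if k = i then (\<Sum>l\<in>{0..<m}. if l = i then M$$(k,l) else 0) else 0))"
    unfolding qf_def by (intro sum.cong) (auto simp add: unit_vec_def sum_delta_mult)
  also have "\<dots> = M$$(i,i)" using assms by (subst sum.delta) auto
  finally show ?thesis .
qed

definition sub3 :: "complex mat \<Rightarrow> complex mat" where
  "sub3 M = mat (dim_row M - 1) (dim_col M - 1) (\<lambda>(i,j). M$$(Suc i, Suc j))"

definition ext0 :: "complex vec \<Rightarrow> complex vec" where
  "ext0 y = vec (Suc (dim_vec y)) (\<lambda>i. if i = 0 then 0 else y$(i-1))"

lemma sub3_carrier[simp]: "M \<in> carrier_mat (Suc m) (Suc m) \<Longrightarrow> sub3 M \<in> carrier_mat m m"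
  by (simp add: sub3_def)

lemma ext0_carrier[simp]: "y \<in> carrier_vec m \<Longrightarrow> ext0 y \<in> carrier_vec (Suc m)"
  by (simp add: ext0_def)

lemma qf_sub3:
  assumes M: "M \<in> carrier_mat (Suc m) (Suc m)" and y: "y \<in> carrier_vec m"
  shows "qf M (ext0 y) = qf (sub3 M) y"
proof -
  have "qf M (ext0 y) = (\<Sum>i\<in>{0..<Suc m}. \<Sum>j\<in>{0..<Suc m}. cnj ((ext0 y)$i) * M$$(i,j) * (ext0 y)$j)"
    using y by (simp add: qf_def ext0_def)
  also have "\<dots> = (\<Sum>i\<in>{0..<m}. \<Sum>j\<in>{0..<m}. cnj ((ext0 y)$Suc i) * M$$(Suc i,Suc j) * (ext0 y)$Suc j)"
    using y by (simp add: sum.atLeast0_lessThan_Suc_shift ext0_def del: sum.op_ivl_Suc)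
  also have "\<dots> = qf (sub3 M) y"
    using y M by (simp add: qf_def ext0_def sub3_def)
  finally show ?thesis .
qed

lemma tr_sub3:
  assumes M: "M \<in> carrier_mat (Suc m) (Suc m)"
  shows "tr M = M$$(0,0) + tr (sub3 M)"
  using M by (simp add: tr_def sub3_def sum.atLeast0_lessThan_Suc_shift del: sum.op_ivl_Suc)


lemma charpoly_block:
  assumes M: "M \<in> carrier_mat (Suc m) (Suc m)" and col: "\<forall>i<Suc m. M$$(i,0) = (if i=0 then e else 0)"
  shows "char_poly M = [:-e,1:] * char_poly (sub3 M)"
proof -
  define A1 where "A1 = mat 1 1 (\<lambda>_. e)"
  define A2 where "A2 = mat 1 m (\<lambda>(i,j). M$$(0,Suc j))"
  have A1: "A1 \<in> carrier_mat 1 1" and A2: "A2 \<in> carrier_mat 1 m" by (auto simp: A1_def A2_def)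
  have S: "sub3 M \<in> carrier_mat m m" using M by simp
  have eq: "M = four_block_mat A1 A2 (0\<^sub>m m 1) (sub3 M)"
  proof (rule eq_matI)
    fix i j assume i: "i < dim_row (four_block_mat A1 A2 (0\<^sub>m m 1) (sub3 M))" and j: "j < dim_col (four_block_mat A1 A2 (0\<^sub>m m 1) (sub3 M))"
    then have "i < Suc m" "j < Suc m" using A1 S by auto
    then show "M $$ (i, j) = four_block_mat A1 A2 (0\<^sub>m m 1) (sub3 M) $$ (i, j)"
      using A1 A2 S M col by (cases i; cases j) (auto simp: A1_def A2_def sub3_def)
  qed (use M A1 in \<open>auto simp: sub3_def\<close>)
  have "char_poly M = char_poly A1 * char_poly (sub3 M)"
    by (subst eq, rule char_poly_four_block_zeros_col[OF A1 A2 S])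
  moreover have "char_poly A1 = [:-e,1:]"
    by (simp add: A1_def char_poly_defs det_def sign_def)
  ultimately show ?thesis by simp
qed

lemma unitary_ext:
  assumes v: "v \<in> carrier_vec m" and v0: "v \<noteq> 0\<^sub>v m"
  shows "\<exists>W c. W \<in> carrier_mat m m \<and> adj W * W = 1\<^sub>m m \<and> W * adj W = 1\<^sub>m m \<and> (\<forall>i<m. W$$(i,0) = c * v$i)"
proof -
  interpret cof_vec_space m "TYPE(complex)" .
  define b where "b = basis_completion v"
  from basis_completion[OF v v0, folded b_def]
  have dist_b: "distinct b" and indep: "\<not> lin_dep (set b)" and b: "set b \<subseteq> carrier_vec m" and hdb: "hd b = v"
    and len_b: "length b = m" by auto
  have m0: "m \<noteq> 0" using v v0 by (cases m) auto
  from hdb len_b m0 obtain vs where bv: "b = v # vs" by (cases b, auto)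
  define ws where "ws = gram_schmidt m b"
  from gram_schmidt_result[OF b dist_b indep refl, folded ws_def]
  have ws: "set ws \<subseteq> carrier_vec m" "corthogonal ws" "length ws = m" by (auto simp: len_b)
  from gram_schmidt_hd[OF v, of vs, folded bv] have hdws: "hd ws = v" unfolding ws_def .
  have ws0: "ws ! 0 = v" using hdws m0 ws(3) by (cases ws) auto
  have wsc: "ws ! j \<in> carrier_vec m" if "j < m" for j using ws that by auto
  define nrm where "nrm j = (\<Sum>k\<in>{0..<m}. (cmod (ws!j $ k))^2)" for j
  have ip: "ws!j \<bullet>c ws!i = (\<Sum>k\<in>{0..<m}. ws!j$k * cnj (ws!i$k))" if "i<m" "j<m" for i j
    using wsc[OF that(1)] wsc[OF that(2)] by (simp add: scalar_prod_def)
  have ipn: "ws!j \<bullet>c ws!j = of_real (nrm j)" if "j<m" for j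
    unfolding ip[OF that that] nrm_def by (simp add: complex_norm_square[symmetric] of_real_sum)
  have nrmpos: "nrm j > 0" if "j<m" for j
  proof -
    have "ws!j \<bullet>c ws!j \<noteq> 0" using ws(2) that ws(3) by (auto simp: corthogonal_def)
    then have "nrm j \<noteq> 0" using ipn[OF that] by auto
    moreover have "nrm j \<ge> 0" unfolding nrm_def by (intro sum_nonneg) auto
    ultimately show ?thesis by linarith
  qed
  define s where "s j = 1 / sqrt (nrm j)" for j
  define W where "W = mat m m (\<lambda>(i,j). complex_of_real (s j) * ws!j $ i)"
  have W: "W \<in> carrier_mat m m" by (simp add: W_def)
  have WW: "adj W * W = 1\<^sub>m m"
  proof (rule eq_matI)
    fix i j assume "i < dim_row (1\<^sub>m m)" "j < dim_col (1\<^sub>m m)"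
    then have i: "i < m" and j: "j < m" by auto
    have "(adj W * W) $$ (i,j) = (\<Sum>k\<in>{0..<m}. cnj (W$$(k,i)) * W$$(k,j))"
      using i j W by (subst mult_idx[OF adj_carrier[OF W] W]) auto
    also have "\<dots> = of_real (s i * s j) * (ws!j \<bullet>c ws!i)"
      unfolding ip[OF i j] using i j by (simp add: W_def sum_distrib_left mult_ac)
    also have "\<dots> = 1\<^sub>m m $$ (i,j)"
    proof (cases "i = j")
      case True
      have "of_real (s j * s j) * of_real (nrm j) = (1::complex)"
        using nrmpos[OF j] unfolding s_def of_real_mult[symmetric]
        by (simp add: field_simps real_sqrt_mult[symmetric])
      then show ?thesis using True ipn[OF j] i by simp
    next
      case False
      then have "ws!j \<bullet>c ws!i = 0" using ws(2) ws(3) i j by (auto simp: corthogonal_def)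
      then show ?thesis using False i j by simp
    qed
    finally show "(adj W * W) $$ (i,j) = 1\<^sub>m m $$ (i,j)" .
  qed (use W in auto)
  have WW2: "W * adj W = 1\<^sub>m m" by (rule mat_mult_left_right_inverse[OF adj_carrier[OF W] W WW])
  have "\<forall>i<m. W$$(i,0) = complex_of_real (s 0) * v$i" using m0 ws0 by (simp add: W_def)
  then show ?thesis using W WW WW2 by blast
qed



lemma tr_nonneg:
  assumes G: "G \<in> carrier_mat m m" and pos: "\<forall>x\<in>carrier_vec m. 0 \<le> Re (qf G x)"
  shows "0 \<le> Re (tr G)"
proof -
  have "Re (tr G) = (\<Sum>i\<in>{0..<m}. Re (G$$(i,i)))" using G by (simp add: tr_def Re_sum)
  also have "\<dots> \<ge> 0"
  proof (rule sum_nonneg)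
    fix i assume "i \<in> {0..<m}"
    then have "i < m" by simp
    then show "0 \<le> Re (G$$(i,i))" using pos qf_unit[of i m G] unit_vec_carrier[of m i] by metis
  qed
  finally show ?thesis .
qed

lemma adjMW_col0:
  assumes W: "W \<in> carrier_mat m m" and M: "M \<in> carrier_mat m m" and WW: "adj W * W = 1\<^sub>m m"
    and v: "v \<in> carrier_vec m" and ev: "M *\<^sub>v v = e \<cdot>\<^sub>v v"
    and Wc: "\<forall>i<m. W$$(i,0) = c * v$i" and i: "i < m" and m0: "0 < m"
  shows "(adj W * M * W)$$(i,0) = (if i = 0 then e else 0)"
proof -
  have Mv: "(\<Sum>l\<in>{0..<m}. M$$(k,l) * v$l) = e * v$k" if "k<m" for k
  proof -
    have "(M *\<^sub>v v)$k = e * v$k" using ev that M v by simp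
    then show ?thesis using mv_idx[OF M v that] by simp
  qed
  have "(adj W * M * W)$$(i,0) = (\<Sum>k\<in>{0..<m}. \<Sum>l\<in>{0..<m}. cnj (W$$(k,i)) * M$$(k,l) * W$$(l,0))"
    by (rule adjMW_idx[OF W M i m0])
  also have "\<dots> = (\<Sum>k\<in>{0..<m}. cnj (W$$(k,i)) * c * (\<Sum>l\<in>{0..<m}. M$$(k,l) * v$l))"
    using Wc by (simp add: sum_distrib_left mult_ac)
  also have "\<dots> = e * (\<Sum>k\<in>{0..<m}. cnj (W$$(k,i)) * W$$(k,0))"
    using Wc Mv by (simp add: sum_distrib_left mult_ac)
  also have "(\<Sum>k\<in>{0..<m}. cnj (W$$(k,i)) * W$$(k,0)) = (adj W * W)$$(i,0)"
    using i m0 W by (subst mult_idx[OF adj_carrier[OF W] W]) auto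
  finally show ?thesis using WW i m0 by simp
qed

lemma key:
  "\<forall>m M G. M \<in> carrier_mat m m \<longrightarrow> G \<in> carrier_mat m m \<longrightarrow> char_poly M = (\<Prod>a\<leftarrow>es. [:-a,1:])
    \<longrightarrow> (\<forall>x\<in>carrier_vec m. Re (qf M x) \<le> Re (qf G x)) \<longrightarrow> (\<forall>x\<in>carrier_vec m. 0 \<le> Re (qf G x))
    \<longrightarrow> (\<forall>n\<le>length es. (\<Sum>k<n. Re (es!k)) \<le> Re (tr G))"
proof (induction es)
  case Nil
  then show ?case using tr_nonneg by auto
next
  case (Cons e es)
  show ?case
  proof (intro allI impI)
    fix m M G n
    assume M: "M \<in> carrier_mat m m" and G: "G \<in> carrier_mat m m"
      and cp: "char_poly M = (\<Prod>a\<leftarrow>e # es. [:- a, 1:])"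
      and le: "\<forall>x\<in>carrier_vec m. Re (qf M x) \<le> Re (qf G x)"
      and pos: "\<forall>x\<in>carrier_vec m. 0 \<le> Re (qf G x)"
      and n: "n \<le> length (e # es)"
    have "eigenvalue M e" unfolding eigenvalue_root_char_poly[OF M] cp by simp
    from find_eigenvector[OF M this] obtain v where "eigenvector M v e" by blast
    then have v: "v \<in> carrier_vec m" and v0: "v \<noteq> 0\<^sub>v m" and ev: "M *\<^sub>v v = e \<cdot>\<^sub>v v"
      using M by (auto simp: eigenvector_def)
    obtain m' where m': "m = Suc m'"
      using v v0 by (cases m) auto
    obtain W c where W: "W \<in> carrier_mat m m" and WW: "adj W * W = 1\<^sub>m m" and WW2: "W * adj W = 1\<^sub>m m"
      and Wc: "\<forall>i<m. W$$(i,0) = c * v$i"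
      using unitary_ext[OF v v0] by blast
    define M' where "M' = adj W * M * W"
    define G' where "G' = adj W * G * W"
    have M': "M' \<in> carrier_mat (Suc m') (Suc m')" using W M m' unfolding M'_def by (metis adj_carrier mult_carrier_mat)
    have G': "G' \<in> carrier_mat (Suc m') (Suc m')" using W G m' unfolding G'_def by (metis adj_carrier mult_carrier_mat)
    have col: "\<forall>i<Suc m'. M'$$(i,0) = (if i = 0 then e else 0)"
      using adjMW_col0[OF W M WW v ev Wc] m' unfolding M'_def by auto
    have "similar_mat_wit M' M (adj W) W"
      unfolding similar_mat_wit_def Let_def using M' M W WW WW2 m' unfolding M'_def by auto
    then have "char_poly M' = char_poly M"
      by (intro char_poly_similar) (auto simp: similar_mat_def)
    then have "[:-e,1:] * char_poly (sub3 M') = [:-e,1:] * (\<Prod>a\<leftarrow>es. [:- a, 1:])"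
      using charpoly_block[OF M' col] cp by simp
    then have cp3: "char_poly (sub3 M') = (\<Prod>a\<leftarrow>es. [:- a, 1:])"
      by (metis mult_cancel_left pCons_eq_0_iff zero_neq_one)
    have le': "Re (qf M' y) \<le> Re (qf G' y)" if "y \<in> carrier_vec m" for y
      unfolding M'_def G'_def using qf_unitary[OF W M that] qf_unitary[OF W G that] le W that by simp
    have pos': "0 \<le> Re (qf G' y)" if "y \<in> carrier_vec m" for y
      unfolding G'_def using qf_unitary[OF W G that] pos W that by simp
    have le3: "\<forall>x\<in>carrier_vec m'. Re (qf (sub3 M') x) \<le> Re (qf (sub3 G') x)"
      using le' qf_sub3[OF M'] qf_sub3[OF G'] m' by (metis ext0_carrier)
    have pos3: "\<forall>x\<in>carrier_vec m'. 0 \<le> Re (qf (sub3 G') x)"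
      using pos' qf_sub3[OF G'] m' by (metis ext0_carrier)
    have IH: "\<forall>n\<le>length es. (\<Sum>k<n. Re (es!k)) \<le> Re (tr (sub3 G'))"
      using Cons.IH sub3_carrier[OF M'] sub3_carrier[OF G'] cp3 le3 pos3 by blast
    have trG: "tr G' = tr G" unfolding G'_def by (rule tr_unitary[OF W G WW2])
    have e00: "Re e \<le> Re (G'$$(0,0))"
      using le'[of "unit_vec m 0"] qf_unit[of 0 m M'] qf_unit[of 0 m G'] col m' by simp
    show "(\<Sum>k<n. Re ((e # es) ! k)) \<le> Re (tr G)"
    proof (cases n)
      case 0
      then show ?thesis using tr_nonneg[OF G pos] by simp
    next
      case (Suc n')
      then have "(\<Sum>k<n. Re ((e # es) ! k)) = Re e + (\<Sum>k<n'. Re (es ! k))"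
        by (simp only: sum.lessThan_Suc_shift) simp
      also have "\<dots> \<le> Re (G'$$(0,0)) + Re (tr (sub3 G'))"
        using e00 IH n Suc by (intro add_mono) auto
      also have "\<dots> = Re (tr G')" using tr_sub3[OF G'] by simp
      finally show ?thesis using trG by simp
    qed
  qed
qed



lemma qf_real:
  assumes x: "x \<in> carrier_vec N"
  shows "Re (qf (mat N N (\<lambda>(i,j). complex_of_real (r i j))) x) = (\<Sum>i\<in>{0..<N}. \<Sum>j\<in>{0..<N}. r i j * Re (cnj (x$i) * x$j))"
proof -
  have d: "dim_vec x = N" using x by simp
  show ?thesis unfolding qf_def d Re_sum
    by (intro sum.cong refl) (simp add: algebra_simps)
qed

lemma antisym_zero:
  fixes N :: nat
  assumes a: "\<forall>i<N. \<forall>j<N. a j i = - a i j"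
  shows "(\<Sum>i\<in>{0..<N}. \<Sum>j\<in>{0..<N}. a i j * Re (cnj (x i) * x j)) = (0::real)"
proof -
  define S where "S = (\<Sum>i\<in>{0..<N}. \<Sum>j\<in>{0..<N}. a i j * Re (cnj (x i) * x j))"
  have "S = (\<Sum>j\<in>{0..<N}. \<Sum>i\<in>{0..<N}. a i j * Re (cnj (x i) * x j))"
    unfolding S_def by (rule sum.swap)
  also have "\<dots> = (\<Sum>j\<in>{0..<N}. \<Sum>i\<in>{0..<N}. - (a j i * Re (cnj (x j) * x i)))"
  proof (intro sum.cong refl)
    fix j i assume "j \<in> {0..<N}" "i \<in> {0..<N}"
    then have e: "a i j = - a j i" using a[rule_format, of i j] by simp
    have "Re (cnj (x i) * x j) = Re (cnj (x j) * x i)" by simp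
    then show "a i j * Re (cnj (x i) * x j) = - (a j i * Re (cnj (x j) * x i))"
      unfolding e by simp
  qed
  also have "\<dots> = - S" unfolding S_def by (simp add: sum_negf)
  finally show ?thesis unfolding S_def[symmetric] by simp
qed

lemma qf_diag_anti:
  fixes N :: nat
  assumes a: "\<forall>i<N. \<forall>j<N. a j i = - a i j"
  shows "(\<Sum>i\<in>{0..<N}. \<Sum>j\<in>{0..<N}. (a i j + (if i = j then d i else 0)) * Re (cnj (x i) * x j))
     = (\<Sum>i\<in>{0..<N}. d i * (cmod (x i))^2)"
proof -
  have "(\<Sum>i\<in>{0..<N}. \<Sum>j\<in>{0..<N}. (a i j + (if i = j then d i else 0)) * Re (cnj (x i) * x j))
     = (\<Sum>i\<in>{0..<N}. \<Sum>j\<in>{0..<N}. a i j * Re (cnj (x i) * x j))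
       + (\<Sum>i\<in>{0..<N}. \<Sum>j\<in>{0..<N}. (if i = j then d i * Re (cnj (x i) * x j) else 0))"
  proof -
    have "(a i j + (if i = j then d i else 0)) * Re (cnj (x i) * x j) = a i j * Re (cnj (x i) * x j) + (if i = j then d i * Re (cnj (x i) * x j) else 0)" for i j
      by (simp add: distrib_right)
    then show ?thesis by (simp add: sum.distrib)
  qed
  also have "\<dots> = (\<Sum>i\<in>{0..<N}. d i * Re (cnj (x i) * x i))"
  proof -
    have dl: "(\<Sum>j\<in>{0..<N}. if i = j then d i * Re (cnj (x i) * x j) else 0) = d i * Re (cnj (x i) * x i)"
      if "i \<in> {0..<N}" for i
      using that by (subst sum.delta') auto
    show ?thesis using antisym_zero[OF a, of x] by (simp only: sum.cong[OF refl dl])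
  qed
  also have "\<dots> = (\<Sum>i\<in>{0..<N}. d i * (cmod (x i))^2)"
    by (intro sum.cong refl) (simp only: cmod_power2, simp add: power2_eq_square)
  finally show ?thesis .
qed

lemma deg_prod_lin: "degree (\<Prod>a\<leftarrow>ls. [:- a, 1:]) = length (ls :: complex list)"
proof (induction ls)
  case Nil
  show ?case by simp
next
  case (Cons b ls)
  have nz: "(\<Prod>a\<leftarrow>ls. [:- a, 1:]) \<noteq> 0" by (auto simp: prod_list_zero_iff)
  have eq: "(\<Prod>a\<leftarrow>b#ls. [:- a, 1:]) = [:-b,1:] * (\<Prod>a\<leftarrow>ls. [:- a, 1:])" by simp
  show ?case unfolding eq by (subst degree_mult_eq) (use nz Cons in auto)
qed



lemma eig_bound:
  fixes N :: nat
  assumes M: "M \<in> carrier_mat N N"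
    and ReqM: "\<And>x. x \<in> carrier_vec N \<Longrightarrow> Re (qf M x) = (\<Sum>i\<in>{0..<N}. d i * (cmod (x$i))^2)"
    and ev: "eigenvalue M a"
    and bnd: "\<forall>i<N. lo \<le> d i \<and> d i \<le> hi"
  shows "lo \<le> Re a \<and> Re a \<le> hi"
proof -
  from ev obtain x where "eigenvector M x a" unfolding eigenvalue_def by blast
  then have x: "x \<in> carrier_vec N" and x0: "x \<noteq> 0\<^sub>v N" and Mx: "M *\<^sub>v x = a \<cdot>\<^sub>v x"
    using M by (auto simp: eigenvector_def)
  define nx where "nx = (\<Sum>i\<in>{0..<N}. (cmod (x$i))^2)"
  have "qf M x = (\<Sum>i\<in>{0..<N}. cnj (x$i) * (\<Sum>j\<in>{0..<N}. M$$(i,j) * x$j))"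
    using x unfolding qf_def by (simp add: sum_distrib_left mult_ac)
  also have "\<dots> = (\<Sum>i\<in>{0..<N}. cnj (x$i) * (M *\<^sub>v x)$i)"
    using x M by (intro sum.cong refl) (simp add: mv_idx del: index_mult_mat_vec)
  also have "\<dots> = (\<Sum>i\<in>{0..<N}. a * (x$i * cnj (x$i)))"
    using x Mx by (intro sum.cong refl) (simp add: mult_ac)
  also have "\<dots> = a * complex_of_real nx"
    unfolding nx_def by (simp add: sum_distrib_left complex_norm_square[symmetric] of_real_sum)
  finally have "Re (qf M x) = Re a * nx" by simp
  then have eq: "Re a * nx = (\<Sum>i\<in>{0..<N}. d i * (cmod (x$i))^2)" using ReqM[OF x] by simp
  obtain i where i: "i < N" "x$i \<noteq> 0"
    using x x0 by (metis carrier_vecD eq_vecI index_zero_vec(1) index_zero_vec(2))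
  have "nx \<ge> (cmod (x$i))^2" unfolding nx_def using i by (intro member_le_sum) auto
  moreover have "(cmod (x$i))^2 > 0" using i by simp
  ultimately have nxp: "nx > 0" by linarith
  have "lo * nx \<le> (\<Sum>i\<in>{0..<N}. d i * (cmod (x$i))^2)"
    unfolding nx_def sum_distrib_left using bnd by (intro sum_mono mult_right_mono) auto
  moreover have "(\<Sum>i\<in>{0..<N}. d i * (cmod (x$i))^2) \<le> hi * nx"
    unfolding nx_def sum_distrib_left using bnd by (intro sum_mono mult_right_mono) auto
  ultimately have 1: "lo * nx \<le> Re a * nx" and 2: "Re a * nx \<le> hi * nx" using eq by linarith+
  show ?thesis using 1 2 by (simp add: mult_le_cancel_right_pos[OF nxp])
qed


theorem mainTheorem2:
  fixes N n :: nat and A :: "real mat" and \<gamma> v :: "nat \<Rightarrow> real" and ls :: "complex list"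
  assumes "N \<ge> 1"
    and "A \<in> carrier_mat N N"
    and "transpose_mat A = - A"
    and "\<forall>j<N. \<gamma> j \<ge> 0"
    and "\<forall>j<N. v j = -1 \<or> v j = 1"
    and "eigenvalue_list (Lmat N A \<gamma> v) ls"
    and "sorted_wrt (\<lambda>a b. Re a \<ge> Re b) ls"
    and "n \<le> N"
  shows "(flipset N v \<noteq> {} \<longrightarrow>
            max 0 (2 * ((\<Sum>j\<in>flipset N v. \<gamma> j) - real n * Max (\<gamma> ` flipset N v)))
              \<le> gap N \<gamma> v ls n
          \<and> gap N \<gamma> v ls n
              \<le> 2 * ((\<Sum>j\<in>flipset N v. \<gamma> j) + real n * Max (\<gamma> ` {..<N})))
       \<and> (flipset N v = {} \<longrightarrow>
            2 * real n * Min (\<gamma> ` {..<N}) \<le> gap N \<gamma> v ls n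
          \<and> gap N \<gamma> v ls n \<le> 2 * real n * Max (\<gamma> ` {..<N}))"
proof -
  note N1 = assms(1) and Ac = assms(2) and tA = assms(3) and gpos = assms(4) and vpm = assms(5)
    and evl = assms(6) and nN = assms(8)
  define d where "d i = 2 * \<gamma> i * v i" for i
  define V where "V = flipset N v"
  have V: "V = {0..<N} \<inter> {j. v j = 1}" unfolding V_def flipset_def by auto
  have finV: "finite V" unfolding V by simp
  define M where "M = map_mat complex_of_real (Lmat N A \<gamma> v)"
  have Meq: "M = mat N N (\<lambda>(i,j). complex_of_real (A$$(i,j) + (if i = j then d i else 0)))"
    unfolding M_def Lmat_def diagD_def d_def using Ac by (intro eq_matI) auto
  have Mc: "M \<in> carrier_mat N N" unfolding Meq by simp
  have anti: "\<forall>i<N. \<forall>j<N. A$$(j,i) = - A$$(i,j)"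
  proof (intro allI impI)
    fix i j assume "i < N" "j < N"
    then have "transpose_mat A $$ (i,j) = (- A) $$ (i,j)" using tA by simp
    then show "A$$(j,i) = - A$$(i,j)" using Ac \<open>i<N\<close> \<open>j<N\<close> by simp
  qed
  have ReqM: "Re (qf M x) = (\<Sum>i\<in>{0..<N}. d i * (cmod (x$i))^2)" if x: "x \<in> carrier_vec N" for x
    unfolding Meq qf_real[OF x] using qf_diag_anti[OF anti, of d "\<lambda>i. x$i"] by simp
  define G where "G = mat N N (\<lambda>(i,j). complex_of_real (if i = j then max (d i) 0 else 0))"
  have Gc: "G \<in> carrier_mat N N" unfolding G_def by simp
  have ReqG: "Re (qf G x) = (\<Sum>i\<in>{0..<N}. max (d i) 0 * (cmod (x$i))^2)" if x: "x \<in> carrier_vec N" for x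
    unfolding G_def qf_real[OF x] using qf_diag_anti[of N "\<lambda>i j. 0" "\<lambda>i. max (d i) 0" "\<lambda>i. x$i"] by simp
  have le: "\<forall>x\<in>carrier_vec N. Re (qf M x) \<le> Re (qf G x)"
    using ReqM ReqG by (auto intro!: sum_mono mult_right_mono)
  have pos: "\<forall>x\<in>carrier_vec N. 0 \<le> Re (qf G x)"
    using ReqG by (auto intro!: sum_nonneg)
  have cp: "char_poly M = (\<Prod>a\<leftarrow>ls. [:- a, 1:])"
    using evl unfolding eigenvalue_list_def M_def .
  have len: "length ls = N"
    using degree_monic_char_poly[OF Mc] deg_prod_lin[of ls] cp by simp
  define S where "S = (\<Sum>k<n. Re (ls!k))"
  have gapS: "gap N \<gamma> v ls n = 2 * (\<Sum>j\<in>V. \<gamma> j) - S"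
    unfolding gap_def L0_def S_def V_def by simp
  have trG: "Re (tr G) = 2 * (\<Sum>j\<in>V. \<gamma> j)"
  proof -
    have "Re (tr G) = (\<Sum>i\<in>{0..<N}. max (d i) 0)"
      unfolding tr_def G_def by (simp add: Re_sum)
    also have "\<dots> = (\<Sum>i\<in>{0..<N}. if i \<in> {j. v j = 1} then 2 * \<gamma> i else 0)"
    proof (intro sum.cong refl)
      fix i assume "i \<in> {0..<N}"
      then have i: "i < N" by simp
      show "max (d i) 0 = (if i \<in> {j. v j = 1} then 2 * \<gamma> i else 0)"
        using vpm i gpos unfolding d_def by (cases "v i = 1") auto
    qed
    also have "\<dots> = (\<Sum>j\<in>V. 2 * \<gamma> j)" unfolding V by (simp add: sum.inter_restrict)
    finally show ?thesis by (simp add: sum_distrib_left)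
  qed
  have SL0: "S \<le> 2 * (\<Sum>j\<in>V. \<gamma> j)"
  proof -
    have K: "\<forall>n'\<le>length ls. (\<Sum>k<n'. Re (ls!k)) \<le> Re (tr G)"
      using key[of ls] Mc Gc cp le pos by blast
    then show ?thesis using nN len trG unfolding S_def by auto
  qed
  have evs: "eigenvalue M a" if "a \<in> set ls" for a
  proof -
    have "poly (char_poly M) a = 0" unfolding cp using that
      by (induction ls) (auto simp: poly_prod_list)
    then show ?thesis using eigenvalue_root_char_poly[OF Mc] by simp
  qed
  have Sbnd: "real n * lo \<le> S \<and> S \<le> real n * hi" if bnd: "\<forall>i<N. lo \<le> d i \<and> d i \<le> hi" for lo hi
  proof -
    have b: "lo \<le> Re (ls!k) \<and> Re (ls!k) \<le> hi" if "k \<in> {..<n}" for k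
    proof -
      have "ls!k \<in> set ls" using that nN len by simp
      then show ?thesis using eig_bound[OF Mc ReqM evs bnd] by blast
    qed
    have "S \<le> real (card {..<n}) * hi" unfolding S_def by (rule sum_bounded_above) (use b in auto)
    moreover have "real (card {..<n}) * lo \<le> S" unfolding S_def by (rule sum_bounded_below) (use b in auto)
    ultimately show ?thesis by simp
  qed
  have "0 \<in> {..<N}" using N1 by simp
  then have finN: "finite (\<gamma> ` {..<N})" "\<gamma> ` {..<N} \<noteq> {}" by auto
  show ?thesis
  proof (intro conjI impI)
    assume Vne: "flipset N v \<noteq> {}"
    then have Vne': "V \<noteq> {}" unfolding V_def .
    define MV where "MV = Max (\<gamma> ` V)"
    define MA where "MA = Max (\<gamma> ` {..<N})"
    obtain j0 where j0: "j0 \<in> V" using Vne' by blast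
    have j0N: "j0 < N" "v j0 = 1" using j0 unfolding V by auto
    have MV0: "MV \<ge> 0"
    proof -
      have "\<gamma> j0 \<le> MV" unfolding MV_def using finV j0 by (intro Max_ge) auto
      then show ?thesis using gpos j0N by force
    qed
    have bnd: "\<forall>i<N. -2 * MA \<le> d i \<and> d i \<le> 2 * MV"
    proof (intro allI impI conjI)
      fix i assume i: "i < N"
      have gA: "\<gamma> i \<le> MA" unfolding MA_def using i by (intro Max_ge) auto
      show "-2 * MA \<le> d i" using vpm i gpos gA unfolding d_def by (cases "v i = 1") auto
      show "d i \<le> 2 * MV"
      proof (cases "v i = 1")
        case True
        then have "i \<in> V" using i unfolding V by auto
        then have "\<gamma> i \<le> MV" unfolding MV_def using finV by (intro Max_ge) auto
        then show ?thesis using True unfolding d_def by simp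
      next
        case False
        then have "v i = -1" using vpm i by auto
        then show ?thesis using gpos[rule_format, OF i] MV0 unfolding d_def by simp
      qed
    qed
    from Sbnd[OF bnd] have B: "real n * (-2 * MA) \<le> S" "S \<le> real n * (2 * MV)" by auto
    have B1: "2 * (real n * MV) \<ge> S" using B by (simp add: algebra_simps)
    have B2: "- (2 * (real n * MA)) \<le> S" using B by (simp add: algebra_simps)
    show "max 0 (2 * ((\<Sum>j\<in>flipset N v. \<gamma> j) - real n * Max (\<gamma> ` flipset N v))) \<le> gap N \<gamma> v ls n"
      unfolding gapS V_def[symmetric] MV_def[symmetric] using SL0 B1 by (simp add: algebra_simps)
    show "gap N \<gamma> v ls n \<le> 2 * ((\<Sum>j\<in>flipset N v. \<gamma> j) + real n * Max (\<gamma> ` {..<N}))"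
      unfolding gapS V_def[symmetric] MA_def[symmetric] using B2 by (simp add: algebra_simps)
  next
    assume Ve: "flipset N v = {}"
    then have Ve': "V = {}" unfolding V_def .
    define mA where "mA = Min (\<gamma> ` {..<N})"
    define MA where "MA = Max (\<gamma> ` {..<N})"
    have bnd: "\<forall>i<N. -2 * MA \<le> d i \<and> d i \<le> -2 * mA"
    proof (intro allI impI conjI)
      fix i assume i: "i < N"
      have "v i \<noteq> 1" using Ve' i unfolding V by auto
      then have vi: "v i = -1" using vpm i by auto
      have gA: "\<gamma> i \<le> MA" unfolding MA_def using i by (intro Max_ge) auto
      have ga: "mA \<le> \<gamma> i" unfolding mA_def using i by (intro Min_le) auto
      show "-2 * MA \<le> d i" using vi gA unfolding d_def by simp
      show "d i \<le> -2 * mA" using vi ga unfolding d_def by simp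
    qed
    from Sbnd[OF bnd] have B: "real n * (-2 * MA) \<le> S" "S \<le> real n * (-2 * mA)" by auto
    have B1: "S \<le> - (2 * real n * mA)" using B by (simp add: algebra_simps)
    have B2: "- (2 * real n * MA) \<le> S" using B by (simp add: algebra_simps)
    show "2 * real n * Min (\<gamma> ` {..<N}) \<le> gap N \<gamma> v ls n"
      unfolding gapS mA_def[symmetric] using B1 Ve' by simp
    show "gap N \<gamma> v ls n \<le> 2 * real n * Max (\<gamma> ` {..<N})"
      unfolding gapS MA_def[symmetric] using B2 Ve' by simp
  qed
qed

end
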